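(* Let $Q$ be a connected quiver of rank $3$ with at least one frozen vertex whose mutable part is mutation-abundant, and let $\mathbf M$ be an infinite reduced weakly balanced mutation sequence. Then there is $i$ such that $Q^{(j)}_{\mathbf M}$ is sign-coherent for all $j>i$.
   Context: A quiver is a finite directed multigraph with no loops and no oriented 2-cycles, whose vertex set is partitioned into mutable and frozen vertices; arrows between two frozen vertices are ignored. Mutation $\mu_j$ at mutable $j$: for each path $i\to j\to k$ with $a$ arrows $i\to j$ and $b$ arrows $j\to k$ add $ab$ arrows $i\to k$, reverse all arrows at $j$, cancel 2-cycles. A mutation sequence $\mathbf M=m_1m_2\cdots$ has $Q^{(0)}_{\mathbf M}=Q$, $Q^{(i)}_{\mathbf M}=\mu_{m_i}(Q^{(i-1)}_{\mathbf M})$; reduced means $m_i\ne m_{i+1}$, weakly balanced means every mutable vertex occurs infinitely often. Connected: the mutable part is connected as an undirected graph and every frozen vertex is adjacent to some mutable vertex. A quiver without frozen vertices is mutation-abundant if every quiver mutation-equivalent to it has at least 2 arrows between every pair of vertices. A mutable vertex adjacent to at least one frozen vertex is red (resp. green) if all arrows between it and frozen vertices point towards (resp. away from) it; a quiver is sign-coherent if every mutable vertex is red or green. *)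

theory Defs
  imports Main
begin

text \<open>A quiver with vertex type 'v is encoded by a set M of mutable vertices,
a set F of frozen vertices and its (skew-symmetric) exchange matrix B, where
B i k = (number of arrows i -> k) - (number of arrows k -> i).  Since quivers
have no loops and no oriented 2-cycles, B determines the quiver.\<close>

definition quiver :: "'v set \<Rightarrow> 'v set \<Rightarrow> ('v \<Rightarrow> 'v \<Rightarrow> int) \<Rightarrow> bool" where
  "quiver M F B \<longleftrightarrow> finite M \<and> finite F \<and> M \<inter> F = {} \<and>
     (\<forall>i k. B i k = - B k i) \<and>
     (\<forall>i k. B i k \<noteq> 0 \<longrightarrow> i \<in> M \<union> F \<and> k \<in> M \<union> F)"

text \<open>Quiver mutation at j: add a*b arrows i -> k for every path i -> j -> k,
reverse the arrows at j, cancel 2-cycles.\<close>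
definition mut :: "'v \<Rightarrow> ('v \<Rightarrow> 'v \<Rightarrow> int) \<Rightarrow> ('v \<Rightarrow> 'v \<Rightarrow> int)" where
  "mut j B = (\<lambda>i k. if i = j \<or> k = j then - B i k
      else B i k + max (B i j) 0 * max (B j k) 0 - max (B k j) 0 * max (B j i) 0)"

fun mutseq :: "(nat \<Rightarrow> 'v) \<Rightarrow> ('v \<Rightarrow> 'v \<Rightarrow> int) \<Rightarrow> nat \<Rightarrow> ('v \<Rightarrow> 'v \<Rightarrow> int)" where
  "mutseq m B 0 = B"
| "mutseq m B (Suc i) = mut (m i) (mutseq m B i)"

definition reduced_seq :: "(nat \<Rightarrow> 'v) \<Rightarrow> bool" where
  "reduced_seq m \<longleftrightarrow> (\<forall>i. m i \<noteq> m (Suc i))"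

definition weakly_balanced :: "'v set \<Rightarrow> (nat \<Rightarrow> 'v) \<Rightarrow> bool" where
  "weakly_balanced M m \<longleftrightarrow> (\<forall>v\<in>M. infinite {i. m i = v})"

definition connected_quiver :: "'v set \<Rightarrow> 'v set \<Rightarrow> ('v \<Rightarrow> 'v \<Rightarrow> int) \<Rightarrow> bool" where
  "connected_quiver M F B \<longleftrightarrow>
     (\<forall>i\<in>M. \<forall>k\<in>M. (\<lambda>x y. x \<in> M \<and> y \<in> M \<and> B x y \<noteq> 0)\<^sup>*\<^sup>* i k) \<and>
     (\<forall>f\<in>F. \<exists>i\<in>M. B f i \<noteq> 0)"

definition mutable_part :: "'v set \<Rightarrow> ('v \<Rightarrow> 'v \<Rightarrow> int) \<Rightarrow> ('v \<Rightarrow> 'v \<Rightarrow> int)" where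
  "mutable_part M B = (\<lambda>i k. if i \<in> M \<and> k \<in> M then B i k else 0)"

definition mutation_abundant :: "'v set \<Rightarrow> ('v \<Rightarrow> 'v \<Rightarrow> int) \<Rightarrow> bool" where
  "mutation_abundant V B \<longleftrightarrow>
     (\<forall>ms. set ms \<subseteq> V \<longrightarrow>
        (\<forall>i\<in>V. \<forall>k\<in>V. i \<noteq> k \<longrightarrow> \<bar>foldl (\<lambda>C j. mut j C) B ms i k\<bar> \<ge> 2))"

definition adj_frozen :: "'v set \<Rightarrow> ('v \<Rightarrow> 'v \<Rightarrow> int) \<Rightarrow> 'v \<Rightarrow> bool" where
  "adj_frozen F B v \<longleftrightarrow> (\<exists>f\<in>F. B f v \<noteq> 0)"

definition red :: "'v set \<Rightarrow> ('v \<Rightarrow> 'v \<Rightarrow> int) \<Rightarrow> 'v \<Rightarrow> bool" where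
  "red F B v \<longleftrightarrow> adj_frozen F B v \<and> (\<forall>f\<in>F. B f v \<ge> 0)"

definition green :: "'v set \<Rightarrow> ('v \<Rightarrow> 'v \<Rightarrow> int) \<Rightarrow> 'v \<Rightarrow> bool" where
  "green F B v \<longleftrightarrow> adj_frozen F B v \<and> (\<forall>f\<in>F. B f v \<le> 0)"

definition sign_coherent :: "'v set \<Rightarrow> 'v set \<Rightarrow> ('v \<Rightarrow> 'v \<Rightarrow> int) \<Rightarrow> bool" where
  "sign_coherent M F B \<longleftrightarrow> (\<forall>v\<in>M. adj_frozen F B v \<longrightarrow> red F B v \<or> green F B v)"

end

theory Submission
  imports Defs
begin

definition IR :: "int \<Rightarrow> int \<Rightarrow> int \<Rightarrow> bool" where
  "IR x y z \<longleftrightarrow> x \<le> 0 \<and> 0 \<le> y \<and> -y \<le> z \<and> z \<le> -x"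
definition KU :: "int \<Rightarrow> int \<Rightarrow> int \<Rightarrow> bool" where
  "KU c x z \<longleftrightarrow> x \<le> 0 \<and> 0 \<le> z \<and> z \<le> (c-1)*(-x)"
definition KW :: "int \<Rightarrow> int \<Rightarrow> int \<Rightarrow> bool" where
  "KW b y z \<longleftrightarrow> 0 \<le> y \<and> -((b-1)*y) \<le> z \<and> z \<le> 0"
definition GR :: "int \<Rightarrow> int \<Rightarrow> int \<Rightarrow> int \<Rightarrow> int \<Rightarrow> bool" where
  "GR b c x y z \<longleftrightarrow> IR x y z \<or> KU c x z \<or> KW b y z"
definition mu :: "int \<Rightarrow> int \<Rightarrow> int \<Rightarrow> int" where
  "mu x y z = 2*(\<bar>x\<bar>+\<bar>y\<bar>+\<bar>z\<bar>) + (if z = 0 then 0 else 1)"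

lemma m2a: "(c::int) \<ge> 2 \<Longrightarrow> X \<ge> 0 \<Longrightarrow> c*X \<ge> 2*X"
  by (simp add: mult_right_mono)
lemma m2b: "(c::int) \<ge> 2 \<Longrightarrow> X \<le> 0 \<Longrightarrow> c*X \<le> 2*X"
  by (simp add: mult_right_mono_neg)
lemma m1a: "(c::int) \<ge> 2 \<Longrightarrow> X \<ge> 0 \<Longrightarrow> (c-1)*X \<ge> X"
  using mult_right_mono[of 1 "c-1" X] by simp
lemma m1e: "(c::int)*X - X = (c-1)*X"
  by (simp add: algebra_simps)

lemma U_neg: assumes "x \<le> 0" shows "z - c*max (-x) 0 = z + c*x" "y + a*max x 0 = (y::int)"
  using assms by (simp_all add: max_def)
lemma U_pos: assumes "x > 0" shows "z - c*max (-x) 0 = z" "y + a*max x 0 = y + a*(x::int)"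
  using assms by (simp_all add: max_def)
lemma W_neg: assumes "y < 0" shows "x - a*max (-y) 0 = x + a*y" "z + b*max y 0 = (z::int)"
  using assms by (simp_all add: max_def)
lemma W_pos: assumes "y \<ge> 0" shows "x - a*max (-y) 0 = x" "z + b*max y 0 = z + b*(y::int)"
  using assms by (simp_all add: max_def)

lemma IR_U:
  assumes "c \<ge> 2" "IR x y z"
  shows "IR (z - c*max (-x) 0) (y + a*max x 0) (-x)"
proof -
  have x: "x \<le> 0" "0 \<le> y" "-y \<le> z" "z \<le> -x" using assms by (auto simp: IR_def)
  have "c*x \<le> 2*x" using m2b[OF assms(1) x(1)] .
  then show ?thesis using x unfolding IR_def U_neg[OF x(1)]
    by (intro conjI) linarith+
qed

lemma IR_W:
  assumes "b \<ge> 2" "IR x y z"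
  shows "IR (x - a*max (-y) 0) (z + b*max y 0) (-y)"
proof -
  have y: "y \<ge> 0" "x \<le> 0" "-y \<le> z" "z \<le> -x" using assms by (auto simp: IR_def)
  have "b*y \<ge> 2*y" using m2a[OF assms(1) y(1)] .
  then show ?thesis using y unfolding IR_def W_pos[OF y(1)]
    by (intro conjI) linarith+
qed

lemma KU_U:
  assumes "c \<ge> 2" "KU c x z"
  shows "KU c (z - c*max (-x) 0) (-x)"
proof -
  have x: "x \<le> 0" "0 \<le> z" "z \<le> (c-1)*(-x)" using assms by (auto simp: KU_def)
  have e: "z - c*max (-x) 0 = z + c*x" using x by (simp add: max_def)
  have h: "(c-1)*(-x) = x - c*x" by (simp add: algebra_simps)
  have "(c-1)*(-(z+c*x)) \<ge> -(z+c*x)" using m1a[OF assms(1), of "-(z+c*x)"] x h by linarith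
  then show ?thesis using x e h unfolding KU_def e by (intro conjI) linarith+
qed

lemma KU_W:
  assumes "a \<ge> 2" "b \<ge> 2" "KU c x z"
  shows "IR (x - a*max (-y) 0) (z + b*max y 0) (-y)"
proof -
  have k: "x \<le> 0" "0 \<le> z" using assms by (auto simp: KU_def)
  show ?thesis
proof (cases "y \<ge> 0")
  case True
  have "b*y \<ge> 2*y" using m2a[OF assms(2) True] .
  then show ?thesis using k True unfolding IR_def W_pos[OF True]
    by (intro conjI) linarith+
next
  case False
  then have y: "y < 0" by simp
  have "a*y \<le> 2*y" using m2b[OF assms(1)] y by simp
  then show ?thesis using k y unfolding IR_def W_neg[OF y]
    by (intro conjI) linarith+
qed
qed

lemma KW_U:
  assumes "a \<ge> 2" "c \<ge> 2" "KW b y z"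
  shows "IR (z - c*max (-x) 0) (y + a*max x 0) (-x)"
proof -
  have k: "0 \<le> y" "z \<le> 0" using assms by (auto simp: KW_def)
  show ?thesis
proof (cases "x \<le> 0")
  case True
  have "c*x \<le> 2*x" using m2b[OF assms(2) True] .
  then show ?thesis using k True unfolding IR_def U_neg[OF True]
    by (intro conjI) linarith+
next
  case False
  then have x: "x > 0" by simp
  have "a*x \<ge> 2*x" using m2a[OF assms(1)] x by simp
  then show ?thesis using k x unfolding IR_def U_pos[OF x]
    by (intro conjI) linarith+
qed
qed

lemma KW_W:
  assumes "b \<ge> 2" "KW b y z"
  shows "KW b (z + b*max y 0) (-y)"
proof -
  have y: "y \<ge> 0" "-((b-1)*y) \<le> z" "z \<le> 0" using assms by (auto simp: KW_def)
  have e: "z + b*max y 0 = z + b*y" using y by (simp add: max_def)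
  have h: "(b-1)*y = b*y - y" by (simp add: algebra_simps)
  have "(b-1)*(z+b*y) \<ge> z+b*y" using m1a[OF assms(1), of "z+b*y"] y h by linarith
  then show ?thesis using y e h unfolding KW_def e by (intro conjI) linarith+
qed

lemma GR_U:
  assumes "a \<ge> 2" "c \<ge> 2"
  shows "GR a c (z - c*max (-x) 0) (y + a*max x 0) (-x) \<or>
         mu (z - c*max (-x) 0) (y + a*max x 0) (-x) < mu x y z"
proof (cases "x > 0")
  case True
  have e1: "z - c*max (-x) 0 = z" "y + a*max x 0 = y + a*x" using U_pos[OF True] by auto
  show ?thesis
  proof (cases "y + a*x \<ge> x")
    case True
    have "(a-1)*(y+a*x) \<ge> y + a*x" using m1a[OF assms(1), of "y+a*x"] True \<open>x>0\<close> by linarith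
    then have "KW a (y+a*x) (-x)" using True \<open>x>0\<close> unfolding KW_def by (intro conjI) linarith+
    then show ?thesis unfolding e1 by (simp add: GR_def)
  next
    case False
    have "a*x \<ge> 2*x" using m2a[OF assms(1), of x] \<open>x>0\<close> by simp
    then have "\<bar>y + a*x\<bar> < \<bar>y\<bar>" using False \<open>x>0\<close> by linarith
    then show ?thesis unfolding e1 using \<open>x>0\<close> by (simp add: mu_def)
  qed
next
  case False
  then have x: "x \<le> 0" by simp
  have e1: "z - c*max (-x) 0 = z + c*x" "y + a*max x 0 = y" using U_neg[OF x] by auto
  show ?thesis
  proof (cases "z + c*x \<le> x")
    case True
    have "(c-1)*(-(z+c*x)) \<ge> -(z+c*x)" using m1a[OF assms(2), of "-(z+c*x)"] True x by linarith
    then have "KU c (z+c*x) (-x)" using True x unfolding KU_def by (intro conjI) linarith+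
    then show ?thesis unfolding e1 by (simp add: GR_def)
  next
    case False
    have cx: "c*x \<le> 2*x" using m2b[OF assms(2) x] .
    show ?thesis
    proof (cases "x = 0")
      case True
      then show ?thesis unfolding e1 using False by (simp add: mu_def)
    next
      case False
      then have "x < 0" using x by simp
      have "\<bar>z + c*x\<bar> < \<bar>z\<bar>" "z \<noteq> 0" using \<open>\<not> z + c*x \<le> x\<close> \<open>x<0\<close> cx by linarith+
      then show ?thesis unfolding e1 using \<open>x<0\<close> by (simp add: mu_def)
    qed
  qed
qed

lemma GR_W:
  assumes "a \<ge> 2" "b \<ge> 2"
  shows "GR b a (x - a*max (-y) 0) (z + b*max y 0) (-y) \<or>
         mu (x - a*max (-y) 0) (z + b*max y 0) (-y) < mu x y z"
proof (cases "y < 0")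
  case True
  have e1: "x - a*max (-y) 0 = x + a*y" "z + b*max y 0 = z" using W_neg[OF True] by auto
  show ?thesis
  proof (cases "x + a*y \<le> y")
    case True
    have "(a-1)*(-(x+a*y)) \<ge> -(x+a*y)" using m1a[OF assms(1), of "-(x+a*y)"] True \<open>y<0\<close> by linarith
    then have "KU a (x+a*y) (-y)" using True \<open>y<0\<close> unfolding KU_def by (intro conjI) linarith+
    then show ?thesis unfolding e1 by (simp add: GR_def)
  next
    case False
    have "a*y \<le> 2*y" using m2b[OF assms(1), of y] \<open>y<0\<close> by simp
    then have "\<bar>x + a*y\<bar> < \<bar>x\<bar>" using False \<open>y<0\<close> by linarith
    then show ?thesis unfolding e1 using \<open>y<0\<close> by (simp add: mu_def)
  qed
next
  case False
  then have y: "y \<ge> 0" by simp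
  have e1: "x - a*max (-y) 0 = x" "z + b*max y 0 = z + b*y" using W_pos[OF y] by auto
  show ?thesis
  proof (cases "z + b*y \<ge> y")
    case True
    have "(b-1)*(z+b*y) \<ge> z+b*y" using m1a[OF assms(2), of "z+b*y"] True y by linarith
    then have "KW b (z+b*y) (-y)" using True y unfolding KW_def by (intro conjI) linarith+
    then show ?thesis unfolding e1 by (simp add: GR_def)
  next
    case False
    have hb: "b*y \<ge> 2*y" using m2a[OF assms(2) y] .
    show ?thesis
    proof (cases "y = 0")
      case True
      then show ?thesis unfolding e1 using False by (simp add: mu_def)
    next
      case False
      then have "y > 0" using y by simp
      have "\<bar>z + b*y\<bar> < \<bar>z\<bar>" "z \<noteq> 0" using \<open>\<not> z + b*y \<ge> y\<close> \<open>y>0\<close> hb by linarith+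
      then show ?thesis unfolding e1 using \<open>y>0\<close> by (simp add: mu_def)
    qed
  qed
qed

definition JJ :: "int \<Rightarrow> int \<Rightarrow> int \<Rightarrow> bool" where
  "JJ al be ga \<longleftrightarrow> 0 \<le> al \<and> 0 \<le> be \<and> -al \<le> ga \<and> ga \<le> 0"
definition hh :: "int \<Rightarrow> int \<Rightarrow> int \<Rightarrow> int" where
  "hh al be ga = (if al \<noteq> 0 then 0 else if be \<noteq> 0 then 1 else if ga \<noteq> 0 then 2 else 3)"
definition mua :: "int \<Rightarrow> int \<Rightarrow> int \<Rightarrow> int" where
  "mua al be ga = 4*(max (-al) 0 + max (-be) 0 + max (-ga) 0) + hh al be ga"

lemma JJ_S:
  assumes "p \<ge> 2" "q \<ge> 2" "JJ al be ga"
  shows "JJ (be + p*max al 0) (ga + q*max al 0) (-al)"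
proof -
  have al: "al \<ge> 0" using assms by (simp add: JJ_def)
  show ?thesis using assms m2a[OF assms(1) al] m2a[OF assms(2) al] al by (simp add: JJ_def max_def)
qed

lemma hh_bd: "0 \<le> hh al be ga" "hh al be ga \<le> 3" by (auto simp: hh_def)

lemma JJ_S_dec:
  assumes "p \<ge> 2" "q \<ge> 2"
  shows "JJ (be + p*max al 0) (ga + q*max al 0) (-al) \<or>
         mua (be + p*max al 0) (ga + q*max al 0) (-al) < mua al be ga"
proof (cases "al > 0")
  case True
  have pa: "p*al \<ge> 2*al" "q*al \<ge> 2*al" using m2a[OF assms(1)] m2a[OF assms(2)] True by auto
  have e: "max al 0 = al" using True by simp
  show ?thesis
  proof (cases "be + p*al \<ge> al \<and> ga + q*al \<ge> 0")
    case True
    then show ?thesis unfolding e JJ_def using \<open>al>0\<close> by (intro disjI1 conjI) linarith+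
  next
    case False
    have "max (-(be + p*al)) 0 + max (-(ga + q*al)) 0 + max (-(-al)) 0 <
          max (-al) 0 + max (-be) 0 + max (-ga) 0"
      using False pa \<open>al>0\<close>
      by (cases "be + p*al \<ge> 0"; cases "ga + q*al \<ge> 0"; cases "be \<ge> 0"; cases "ga \<ge> 0"; simp add: max_def; linarith)
    then show ?thesis using e hh_bd[of al be ga] hh_bd[of "be + p*al" "ga + q*al" "-al"]
      by (simp add: mua_def)
  qed
next
  case False
  have e: "max al 0 = 0" using False by simp
  show ?thesis
  proof (cases "al < 0")
    case True
    then show ?thesis using e hh_bd[of al be ga] hh_bd[of be ga "-al"]
      by (simp add: mua_def max_def)
  next
    case False
    then have "al = 0" using \<open>\<not> al > 0\<close> by simp
    then show ?thesis using e by (simp add: mua_def hh_def JJ_def)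
  qed
qed

lemma skew_mut:
  assumes "\<And>i k. C i k = - C k i"
  shows "mut j C i k = - mut j C k i"
proof (cases "i = j \<or> k = j")
  case True
  then show ?thesis using assms[of i k] unfolding mut_def by auto
next
  case False
  then have "mut j C i k = C i k + max (C i j) 0 * max (C j k) 0 - max (C k j) 0 * max (C j i) 0"
    "mut j C k i = C k i + max (C k j) 0 * max (C j i) 0 - max (C i j) 0 * max (C j k) 0"
    unfolding mut_def by auto
  then show ?thesis using assms[of i k] by simp
qed

lemma skew_seq:
  assumes "\<And>i k. B i k = - B k i"
  shows "mutseq m B t i k = - mutseq m B t k i"
proof (induction t arbitrary: i k)
  case 0 then show ?case using assms[of i k] by simp
next
  case (Suc t) show ?case unfolding mutseq.simps(2) by (rule skew_mut) (rule Suc.IH)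
qed

lemma mp_mut:
  assumes "j \<in> M"
  shows "mutable_part M (mut j C) = mut j (mutable_part M C)"
  using assms by (intro ext) (auto simp: mutable_part_def mut_def)

lemma mp_seq:
  assumes "\<And>i. m i \<in> M"
  shows "mutable_part M (mutseq m B t) = foldl (\<lambda>C j. mut j C) (mutable_part M B) (map m [0..<t])"
proof (induction t)
  case 0 then show ?case by simp
next
  case (Suc t) then show ?case using mp_mut[OF assms] by simp
qed

lemma ab2:
  assumes "mutation_abundant M (mutable_part M B)" "\<And>i. m i \<in> M"
    and "i \<in> M" "k \<in> M" "i \<noteq> k"
  shows "\<bar>mutseq m B t i k\<bar> \<ge> 2"
proof -
  have "set (map m [0..<t]) \<subseteq> M" using assms(2) by auto
  then have ineq: "\<bar>foldl (\<lambda>C j. mut j C) (mutable_part M B) (map m [0..<t]) i k\<bar> \<ge> 2"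
    using assms(1,3-5) unfolding mutation_abundant_def by blast
  have eq2: "mutable_part M (mutseq m B t) i k = mutseq m B t i k"
    using assms(3,4) by (simp add: mutable_part_def)
  have eq1: "mutable_part M (mutseq m B t) i k = foldl (\<lambda>C j. mut j C) (mutable_part M B) (map m [0..<t]) i k"
    using mp_seq[of m M B t, OF assms(2)] by (rule fun_cong[OF fun_cong])
  have "foldl (\<lambda>C j. mut j C) (mutable_part M B) (map m [0..<t]) i k = mutseq m B t i k"
    by (rule trans[OF sym[OF eq1] eq2])
  then show ?thesis using ineq by (simp only:)
qed

lemma M3:
  assumes "card M = 3" "k \<in> M" "u \<in> M" "w \<in> M" "k \<noteq> u" "u \<noteq> w" "k \<noteq> w" "v \<in> M"
  shows "v = k \<or> v = u \<or> v = w"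
proof -
  have fin: "finite M" using assms(1) card.infinite by fastforce
  have sub: "{k,u,w} \<subseteq> M" using assms by auto
  have "card {k,u,w} = 3" using assms(5-7) by simp
  then have "{k,u,w} = M" using card_subset_eq[OF fin sub] assms(1) by simp
  then show ?thesis using assms(8) by blast
qed

lemma other2:
  assumes "card M = 3" "j \<in> M"
  obtains p q where "p \<in> M" "q \<in> M" "p \<noteq> q" "p \<noteq> j" "q \<noteq> j"
proof -
  obtain x y z where "M = {x,y,z}" "x \<noteq> y" "y \<noteq> z" "x \<noteq> z"
    using assms(1) card_3_iff by metis
  note xyz = this
  show ?thesis
  proof (cases "j = x")
    case True then show ?thesis using xyz that[of y z] by simp
  next
    case False
    then have "j = y \<or> j = z" using xyz assms(2) by blast
    then show ?thesis using xyz that[of x z] that[of x y] by blast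
  qed
qed

definition frame :: "'v set \<Rightarrow> ('v \<Rightarrow> 'v \<Rightarrow> int) \<Rightarrow> 'v \<Rightarrow> 'v \<Rightarrow> 'v \<Rightarrow> bool" where
  "frame M C k u w \<longleftrightarrow> k \<in> M \<and> u \<in> M \<and> w \<in> M \<and> k \<noteq> u \<and> u \<noteq> w \<and> k \<noteq> w \<and>
     C k u > 0 \<and> C u w > 0 \<and> C w k > 0"
definition cyc :: "'v set \<Rightarrow> ('v \<Rightarrow> 'v \<Rightarrow> int) \<Rightarrow> 'v \<Rightarrow> bool" where
  "cyc M C k \<longleftrightarrow> (\<exists>u w. frame M C k u w)"
definition growth :: "'v set \<Rightarrow> ('v \<Rightarrow> 'v \<Rightarrow> int) \<Rightarrow> 'v \<Rightarrow> bool" where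
  "growth M C k \<longleftrightarrow> (\<exists>u w. frame M C k u w \<and> C u w \<ge> C k u \<and> C u w \<ge> C w k)"
definition src :: "'v set \<Rightarrow> int \<Rightarrow> ('v \<Rightarrow> 'v \<Rightarrow> int) \<Rightarrow> 'v \<Rightarrow> bool" where
  "src M s C j \<longleftrightarrow> j \<in> M \<and> (\<forall>v\<in>M. v \<noteq> j \<longrightarrow> s * C j v > 0)"

lemma frame_rot: "frame M C k u w \<Longrightarrow> frame M C u w k"
  by (auto simp: frame_def)

lemma cyc_any:
  assumes "card M = 3" "frame M C a b c" "k \<in> M"
  shows "cyc M C k"
proof -
  have f: "a \<in> M" "b \<in> M" "c \<in> M" "a \<noteq> b" "b \<noteq> c" "a \<noteq> c" using assms(2) by (auto simp: frame_def)
  have "k = a \<or> k = b \<or> k = c" using M3[OF assms(1) f assms(3)] .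
  then show ?thesis using assms(2) frame_rot[OF assms(2)] frame_rot[OF frame_rot[OF assms(2)]]
    unfolding cyc_def by blast
qed

lemma frame_uniq:
  assumes "card M = 3" "\<And>i k. C i k = - C k i" "frame M C k u w" "frame M C k u' w'"
  shows "u' = u \<and> w' = w"
proof -
  have f: "k \<in> M" "u \<in> M" "w \<in> M" "k \<noteq> u" "u \<noteq> w" "k \<noteq> w" "C k u > 0" "C u w > 0" "C w k > 0"
    using assms(3) by (auto simp: frame_def)
  have g: "u' \<in> M" "w' \<in> M" "k \<noteq> u'" "u' \<noteq> w'" "k \<noteq> w'" "C k u' > 0" "C u' w' > 0" "C w' k > 0"
    using assms(4) by (auto simp: frame_def)
  have u': "u' = u \<or> u' = w" using M3[OF assms(1) f(1-6) g(1)] g(3) by auto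
  have w': "w' = u \<or> w' = w" using M3[OF assms(1) f(1-6) g(2)] g(5) by auto
  have "u' \<noteq> w" using g(6) f(9) assms(2)[of k w] by auto
  moreover have "w' \<noteq> u" using g(8) f(7) assms(2)[of k u] by auto
  ultimately show ?thesis using u' w' by auto
qed

lemma mut_off: "i \<noteq> j \<Longrightarrow> k \<noteq> j \<Longrightarrow>
  mut j C i k = C i k + max (C i j) 0 * max (C j k) 0 - max (C k j) 0 * max (C j i) 0"
  by (simp add: mut_def)
lemma mut_on1: "mut j C i j = - C i j" by (simp add: mut_def)
lemma mut_on2: "mut j C j k = - C j k" by (simp add: mut_def)

lemma descent:
  fixes g :: "nat \<Rightarrow> int"
  assumes "\<And>n. n \<ge> N \<Longrightarrow> \<not> P n \<Longrightarrow> P (Suc n) \<or> g (Suc n) < g n" "\<And>n. g n \<ge> 0"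
  shows "\<exists>n\<ge>N. P n"
proof (rule ccontr)
  assume H: "\<not> (\<exists>n\<ge>N. P n)"
  have "g (N + d) \<le> g N - int d" for d
  proof (induction d)
    case 0 then show ?case by simp
  next
    case (Suc d)
    have "\<not> P (N + d)" "\<not> P (Suc (N + d))" using H by auto
    then have "g (Suc (N + d)) < g (N + d)" using assms(1)[of "N + d"] by auto
    then show ?case using Suc by simp
  qed
  from this[of "nat (g N) + 1"] assms(2)[of "N + (nat (g N) + 1)"] assms(2)[of N] show False by simp
qed

lemma fin_ev0:
  fixes P :: "'a \<Rightarrow> nat \<Rightarrow> bool"
  assumes "finite F"
  shows "(\<forall>f\<in>F. \<exists>n. \<forall>n'\<ge>n. P f n') \<longrightarrow> (\<exists>n. \<forall>f\<in>F. \<forall>n'\<ge>n. P f n')"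
  using assms
proof (induction F rule: finite_induct)
  case empty then show ?case by simp
next
  case (insert x F)
  show ?case
  proof
    assume h: "\<forall>f\<in>insert x F. \<exists>n. \<forall>n'\<ge>n. P f n'"
    then obtain n1 where n1: "\<forall>f\<in>F. \<forall>n'\<ge>n1. P f n'" using insert.IH by auto
    obtain n2 where n2: "\<forall>n'\<ge>n2. P x n'" using h by auto
    show "\<exists>n. \<forall>f\<in>insert x F. \<forall>n'\<ge>n. P f n'"
    proof (rule exI[of _ "max n1 n2"], intro ballI allI impI)
      fix f t assume a: "f \<in> insert x F" "max n1 n2 \<le> t"
      then have "n1 \<le> t" "n2 \<le> t" by simp_all
      then show "P f t" using a(1) n1 n2 by blast
    qed
  qed
qed

lemma fin_ev:
  fixes P :: "'a \<Rightarrow> nat \<Rightarrow> bool"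
  assumes "finite F" "\<And>f. f \<in> F \<Longrightarrow> \<exists>n. \<forall>n'\<ge>n. P f n'"
  shows "\<exists>n. \<forall>f\<in>F. \<forall>n'\<ge>n. P f n'"
  using fin_ev0[OF assms(1)] assms(2) by blast

locale QS =
  fixes M F :: "'v set" and B :: "'v \<Rightarrow> 'v \<Rightarrow> int" and m :: "nat \<Rightarrow> 'v"
  assumes skewB: "\<And>i k. B i k = - B k i"
    and card3: "card M = 3" and disj: "M \<inter> F = {}" and finF: "finite F"
    and abund: "mutation_abundant M (mutable_part M B)"
    and inM: "\<And>i. m i \<in> M" and redm: "\<And>i. m i \<noteq> m (Suc i)"
    and wbal: "\<And>v. v \<in> M \<Longrightarrow> infinite {i. m i = v}"
begin

definition S :: "nat \<Rightarrow> 'v \<Rightarrow> 'v \<Rightarrow> int" where "S n = mutseq m B (Suc n)"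

lemma S_Suc: "S (Suc n) = mut (m (Suc n)) (S n)" by (simp add: S_def)
lemma S_skew: "S n i k = - S n k i" unfolding S_def by (rule skew_seq[OF skewB])
lemma S_ab: "i \<in> M \<Longrightarrow> k \<in> M \<Longrightarrow> i \<noteq> k \<Longrightarrow> \<bar>S n i k\<bar> \<ge> 2"
  unfolding S_def by (rule ab2[OF abund inM])
lemma S_pos2: "i \<in> M \<Longrightarrow> k \<in> M \<Longrightarrow> i \<noteq> k \<Longrightarrow> S n i k > 0 \<Longrightarrow> S n i k \<ge> 2"
  using S_ab[of i k n] by simp
lemma S_flip: "i \<in> M \<Longrightarrow> k \<in> M \<Longrightarrow> i \<noteq> k \<Longrightarrow> \<not> S n i k > 0 \<Longrightarrow> S n k i > 0"
  using S_ab[of i k n] S_skew[of n i k] by simp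
lemma S_flip2: "S n i k > 0 \<Longrightarrow> S n k i < 0"
  using S_skew[of n i k] by simp
lemma fM: "f \<in> F \<Longrightarrow> f \<notin> M" using disj by auto

abbreviation "cycS n \<equiv> cyc M (S n) (m n)"
abbreviation "growS n \<equiv> growth M (S n) (m n)"

lemma growth_step:
  assumes "growS n" shows "growS (Suc n)"
proof -
  let ?k = "m n" let ?j = "m (Suc n)" let ?C = "S n"
  obtain u w where fr: "frame M ?C ?k u w" and g1: "?C u w \<ge> ?C ?k u" and g2: "?C u w \<ge> ?C w ?k"
    using assms unfolding growth_def by blast
  have f: "?k \<in> M" "u \<in> M" "w \<in> M" "?k \<noteq> u" "u \<noteq> w" "?k \<noteq> w" "?C ?k u > 0" "?C u w > 0" "?C w ?k > 0"
    using fr by (auto simp: frame_def)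
  have c2: "?C ?k u \<ge> 2" using S_pos2 f by blast
  have b2: "?C w ?k \<ge> 2" using S_pos2 f by blast
  have ju: "?j = u \<or> ?j = w" using M3[OF card3 f(1-6) inM[of "Suc n"]] redm[of n] by auto
  have SS: "S (Suc n) = mut ?j ?C" by (rule S_Suc)
  show ?thesis
  proof (cases "?j = u")
    case True
    have e1: "S (Suc n) u ?k = ?C ?k u" using SS True mut_on2[of u ?C ?k] S_skew[of n u ?k] by simp
    have e2: "S (Suc n) ?k w = ?C ?k u * ?C u w - ?C w ?k"
      using SS True mut_off[of ?k u w ?C] f S_skew[of n ?k w] S_skew[of n w u] S_skew[of n u ?k] by simp
    have e3: "S (Suc n) w u = ?C u w" using SS True mut_on1[of u ?C w] S_skew[of n w u] by simp
    have pr: "?C ?k u * ?C u w \<ge> 2 * ?C u w" using m2a[OF c2] f by simp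
    have i1: "S (Suc n) u ?k > 0" "S (Suc n) ?k w > 0" "S (Suc n) w u > 0"
      "S (Suc n) ?k w \<ge> S (Suc n) u ?k" "S (Suc n) ?k w \<ge> S (Suc n) w u"
      using pr e1 e2 e3 f g1 g2 by linarith+
    have "frame M (S (Suc n)) u ?k w \<and> S (Suc n) ?k w \<ge> S (Suc n) u ?k \<and> S (Suc n) ?k w \<ge> S (Suc n) w u"
      using i1 f unfolding frame_def by auto
    then show ?thesis unfolding growth_def using True by auto
  next
    case False
    then have jw: "?j = w" using ju by simp
    have e1: "S (Suc n) w u = ?C u w" using SS jw mut_on2[of w ?C u] S_skew[of n w u] by simp
    have e2: "S (Suc n) u ?k = ?C u w * ?C w ?k - ?C ?k u"
      using SS jw mut_off[of u w ?k ?C] f S_skew[of n u ?k] S_skew[of n ?k w] S_skew[of n w u] by simp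
    have e3: "S (Suc n) ?k w = ?C w ?k" using SS jw mut_on1[of w ?C ?k] S_skew[of n ?k w] by simp
    have pr: "?C u w * ?C w ?k \<ge> 2 * ?C u w" using m2a[OF b2, of "?C u w"] f by (simp add: mult.commute)
    have i1: "S (Suc n) w u > 0" "S (Suc n) u ?k > 0" "S (Suc n) ?k w > 0"
      "S (Suc n) u ?k \<ge> S (Suc n) w u" "S (Suc n) u ?k \<ge> S (Suc n) ?k w"
      using pr e1 e2 e3 f g1 g2 by linarith+
    have "frame M (S (Suc n)) w u ?k \<and> S (Suc n) u ?k \<ge> S (Suc n) w u \<and> S (Suc n) u ?k \<ge> S (Suc n) ?k w"
      using i1 f unfolding frame_def by auto
    then show ?thesis unfolding growth_def using jw by auto
  qed
qed

lemma growth_forever: assumes "growS n" "n \<le> n'" shows "growS n'"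
  using assms(2)
proof (induction n' rule: dec_induct)
  case base then show ?case using assms(1) by simp
next
  case (step n') then show ?case using growth_step by blast
qed

lemma growth_cyc: "growS n \<Longrightarrow> cycS n"
  unfolding growth_def cyc_def by blast

lemma acyc_to_growth:
  assumes "\<not> cycS n" "cycS (Suc n)" shows "growS (Suc n)"
proof -
  let ?j = "m (Suc n)" let ?C = "S n"
  have SS: "S (Suc n) = mut ?j ?C" by (rule S_Suc)
  obtain u w where fr: "frame M (S (Suc n)) ?j u w" using assms(2) unfolding cyc_def by blast
  have f: "?j \<in> M" "u \<in> M" "w \<in> M" "?j \<noteq> u" "u \<noteq> w" "?j \<noteq> w"
    "S (Suc n) ?j u > 0" "S (Suc n) u w > 0" "S (Suc n) w ?j > 0"
    using fr by (auto simp: frame_def)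
  have uj: "?C u ?j > 0" using f(7) SS mut_on2[of ?j ?C u] S_skew[of n ?j u] by simp
  have jw: "?C ?j w > 0" using f(9) SS mut_on1[of ?j ?C w] S_skew[of n w ?j] by simp
  have uw: "?C u w > 0"
  proof (rule ccontr)
    assume "\<not> ?C u w > 0"
    then have "?C w u > 0" using S_flip f by blast
    then have "frame M ?C ?j w u" using f jw uj unfolding frame_def by auto
    then have "cyc M ?C (m n)" using cyc_any[OF card3 _ inM] by blast
    then show False using assms(1) by simp
  qed
  have p2: "?C u ?j \<ge> 2" "?C ?j w \<ge> 2" using S_pos2 f uj jw by auto
  have e: "S (Suc n) u w = ?C u w + ?C u ?j * ?C ?j w"
    using SS mut_off[of u ?j w ?C] f uj jw S_flip2[OF uj] S_flip2[OF jw] by simp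
  have e1: "S (Suc n) ?j u = ?C u ?j" using SS mut_on2[of ?j ?C u] S_skew[of n ?j u] by simp
  have e2: "S (Suc n) w ?j = ?C ?j w" using SS mut_on1[of ?j ?C w] S_skew[of n w ?j] by simp
  have "?C u ?j * ?C ?j w \<ge> 2 * ?C u ?j" using m2a[OF p2(2), of "?C u ?j"] uj by (simp add: mult.commute)
  moreover have "?C u ?j * ?C ?j w \<ge> 2 * ?C ?j w" using m2a[OF p2(1), of "?C ?j w"] jw by simp
  ultimately have "S (Suc n) ?j u \<le> S (Suc n) u w" "S (Suc n) w ?j \<le> S (Suc n) u w"
    using e e1 e2 uw uj jw by linarith+
  then show ?thesis unfolding growth_def using fr by blast
qed

lemma regime: "(\<exists>T. \<forall>n\<ge>T. cycS n) \<or> (\<exists>T. \<forall>n\<ge>T. \<not> cycS n)"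
proof (cases "\<exists>n. \<not> cycS n \<and> cycS (Suc n)")
  case True
  then obtain n where "\<not> cycS n" "cycS (Suc n)" by blast
  then have "growS (Suc n)" by (rule acyc_to_growth)
  then have "\<forall>n'\<ge>Suc n. cycS n'" using growth_forever growth_cyc by blast
  then show ?thesis by blast
next
  case False
  show ?thesis
  proof (cases "\<exists>n. \<not> cycS n")
    case True
    then obtain n where n: "\<not> cycS n" by blast
    have "\<not> cycS n'" if "n' \<ge> n" for n'
      using that
    proof (induction n' rule: dec_induct)
      case base then show ?case using n .
    next
      case (step n') then show ?case using False by blast
    qed
    then show ?thesis by blast
  next
    case False
    then show ?thesis by blast
  qed
qed

end

locale QC = QS +
  fixes T :: nat
  assumes cycA: "\<And>n. n \<ge> T \<Longrightarrow> cycS n"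
begin

definition fr where
  "fr n = (SOME p. frame M (S n) (m n) (fst p) (snd p))"
definition U where "U n = fst (fr n)"
definition W where "W n = snd (fr n)"

lemma frU: assumes "n \<ge> T" shows "frame M (S n) (m n) (U n) (W n)"
proof -
  obtain u w where "frame M (S n) (m n) u w" using cycA[OF assms] unfolding cyc_def by blast
  then have "\<exists>p. frame M (S n) (m n) (fst p) (snd p)" by (intro exI[of _ "(u,w)"]) simp
  then show ?thesis unfolding U_def W_def fr_def by (rule someI_ex)
qed

lemma frF: assumes "n \<ge> T" shows "U n \<in> M" "W n \<in> M" "m n \<noteq> U n" "U n \<noteq> W n" "m n \<noteq> W n"
  "S n (m n) (U n) > 0" "S n (U n) (W n) > 0" "S n (W n) (m n) > 0"
  using frU[OF assms] by (auto simp: frame_def)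

lemma fr_eq: assumes "n \<ge> T" "frame M (S n) (m n) u w" shows "U n = u \<and> W n = w"
  using frame_uniq[OF card3 _ assms(2) frU[OF assms(1)]] S_skew by blast

lemma next_in: assumes "n \<ge> T" shows "m (Suc n) = U n \<or> m (Suc n) = W n"
  using M3[OF card3 inM frF(1,2)[OF assms] frF(3-5)[OF assms] inM[of "Suc n"]] redm[of n] assms
  by auto

lemma trans_U: assumes "n \<ge> T" "m (Suc n) = U n"
  shows "U (Suc n) = m n \<and> W (Suc n) = W n"
proof -
  have f: "U n \<in> M" "W n \<in> M" "m n \<noteq> U n" "U n \<noteq> W n" "m n \<noteq> W n" "S n (U n) (W n) > 0"
    using frF[OF assms(1)] by auto
  have g: "U (Suc n) \<in> M" "W (Suc n) \<in> M" "m (Suc n) \<noteq> U (Suc n)" "U (Suc n) \<noteq> W (Suc n)"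
    "m (Suc n) \<noteq> W (Suc n)" "S (Suc n) (m (Suc n)) (U (Suc n)) > 0"
    using frF[of "Suc n"] assms(1) by auto
  have "S (Suc n) (U n) (W n) = - S n (U n) (W n)" using S_Suc assms(2) mut_on2 by metis
  then have "U (Suc n) \<noteq> W n" using g(6) f(6) assms(2) by auto
  then have u: "U (Suc n) = m n" using M3[OF card3 inM f(1,2) f(3-5) g(1)] g(3) assms(2) by auto
  have "W (Suc n) = W n" using M3[OF card3 inM f(1,2) f(3-5) g(2)] g(4,5) u assms(2) by auto
  then show ?thesis using u by simp
qed

lemma trans_W: assumes "n \<ge> T" "m (Suc n) = W n"
  shows "U (Suc n) = U n \<and> W (Suc n) = m n"
proof -
  have f: "U n \<in> M" "W n \<in> M" "m n \<noteq> U n" "U n \<noteq> W n" "m n \<noteq> W n" "S n (U n) (W n) > 0"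
    using frF[OF assms(1)] by auto
  have g: "U (Suc n) \<in> M" "W (Suc n) \<in> M" "m (Suc n) \<noteq> U (Suc n)" "U (Suc n) \<noteq> W (Suc n)"
    "m (Suc n) \<noteq> W (Suc n)" "S (Suc n) (W (Suc n)) (m (Suc n)) > 0"
    using frF[of "Suc n"] assms(1) by auto
  have "S (Suc n) (U n) (W n) = - S n (U n) (W n)" using S_Suc assms(2) mut_on1 by metis
  then have "W (Suc n) \<noteq> U n" using g(6) f(6) assms(2) by auto
  then have w: "W (Suc n) = m n" using M3[OF card3 inM f(1,2) f(3-5) g(2)] g(5) assms(2) by auto
  have "U (Suc n) = U n" using M3[OF card3 inM f(1,2) f(3-5) g(1)] g(3,4) w assms(2) by auto
  then show ?thesis using w by simp
qed

definition X where "X f n = S n f (U n)"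
definition Y where "Y f n = S n f (W n)"
definition Z where "Z f n = S n f (m n)"
definition wa where "wa n = S n (U n) (W n)"
definition wb where "wb n = S n (W n) (m n)"
definition wc where "wc n = S n (m n) (U n)"

lemma w2: assumes "n \<ge> T" shows "wa n \<ge> 2" "wb n \<ge> 2" "wc n \<ge> 2"
  using frF[OF assms] S_pos2 inM unfolding wa_def wb_def wc_def by metis+

lemma stepU: assumes "n \<ge> T" "m (Suc n) = U n" "f \<notin> M"
  shows "X f (Suc n) = Z f n - wc n * max (- X f n) 0" "Y f (Suc n) = Y f n + wa n * max (X f n) 0"
    "Z f (Suc n) = - X f n" "wb (Suc n) = wa n" "wc (Suc n) = wc n"
proof -
  let ?u = "U n" let ?w = "W n" let ?k = "m n" let ?C = "S n"
  have tr: "U (Suc n) = ?k" "W (Suc n) = ?w" using trans_U[OF assms(1,2)] by auto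
  have f: "?u \<in> M" "?w \<in> M" "?k \<noteq> ?u" "?u \<noteq> ?w" "?k \<noteq> ?w" "?C ?k ?u > 0" "?C ?u ?w > 0" "?C ?w ?k > 0"
    using frF[OF assms(1)] by auto
  have fu: "f \<noteq> ?u" "f \<noteq> ?w" "f \<noteq> ?k" using assms(3) f inM by auto
  have SS: "S (Suc n) = mut ?u ?C" using S_Suc assms(2) by simp
  have n1: "?C ?u ?k < 0" "?C ?w ?u < 0" using S_flip2 f by auto
  have sk: "?C ?u f = - ?C f ?u" using S_skew by blast
  show "X f (Suc n) = Z f n - wc n * max (- X f n) 0"
    unfolding X_def Z_def wc_def tr SS using mut_off[of f ?u ?k ?C] fu f n1 sk by simp
  show "Y f (Suc n) = Y f n + wa n * max (X f n) 0"
    unfolding X_def Y_def wa_def tr SS using mut_off[of f ?u ?w ?C] fu f n1 by (simp add: mult.commute)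
  show "Z f (Suc n) = - X f n"
    unfolding X_def Z_def SS assms(2) by (simp add: mut_on1)
  show "wb (Suc n) = wa n"
    unfolding wa_def wb_def tr SS assms(2) using mut_on1[of ?u ?C ?w] S_skew[of n ?w ?u] by simp
  show "wc (Suc n) = wc n"
    unfolding wc_def tr SS assms(2) using mut_on2[of ?u ?C ?k] S_skew[of n ?u ?k] by simp
qed

lemma stepW: assumes "n \<ge> T" "m (Suc n) = W n" "f \<notin> M"
  shows "X f (Suc n) = X f n - wa n * max (- Y f n) 0" "Y f (Suc n) = Z f n + wb n * max (Y f n) 0"
    "Z f (Suc n) = - Y f n" "wb (Suc n) = wb n" "wc (Suc n) = wa n"
proof -
  let ?u = "U n" let ?w = "W n" let ?k = "m n" let ?C = "S n"
  have tr: "U (Suc n) = ?u" "W (Suc n) = ?k" using trans_W[OF assms(1,2)] by auto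
  have f: "?u \<in> M" "?w \<in> M" "?k \<noteq> ?u" "?u \<noteq> ?w" "?k \<noteq> ?w" "?C ?k ?u > 0" "?C ?u ?w > 0" "?C ?w ?k > 0"
    using frF[OF assms(1)] by auto
  have fu: "f \<noteq> ?u" "f \<noteq> ?w" "f \<noteq> ?k" using assms(3) f inM by auto
  have SS: "S (Suc n) = mut ?w ?C" using S_Suc assms(2) by simp
  have n1: "?C ?w ?u < 0" "?C ?k ?w < 0" using S_flip2 f by auto
  have sk: "?C ?w f = - ?C f ?w" using S_skew by blast
  show "X f (Suc n) = X f n - wa n * max (- Y f n) 0"
    unfolding X_def Y_def wa_def tr SS using mut_off[of f ?w ?u ?C] fu f n1 sk by simp
  show "Y f (Suc n) = Z f n + wb n * max (Y f n) 0"
    unfolding Z_def Y_def wb_def tr SS using mut_off[of f ?w ?k ?C] fu f n1 by (simp add: mult.commute)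
  show "Z f (Suc n) = - Y f n"
    unfolding Y_def Z_def SS assms(2) by (simp add: mut_on1)
  show "wb (Suc n) = wb n"
    unfolding wb_def tr SS assms(2) using mut_on1[of ?w ?C ?k] S_skew[of n ?k ?w] by simp
  show "wc (Suc n) = wa n"
    unfolding wc_def wa_def tr SS assms(2) using mut_on2[of ?w ?C ?u] S_skew[of n ?w ?u] by simp
qed

end

context QC begin

abbreviation "IRn f n \<equiv> IR (X f n) (Y f n) (Z f n)"
abbreviation "KUn f n \<equiv> KU (wc n) (X f n) (Z f n)"
abbreviation "KWn f n \<equiv> KW (wb n) (Y f n) (Z f n)"
abbreviation "GRn f n \<equiv> GR (wb n) (wc n) (X f n) (Y f n) (Z f n)"

lemma IR_step: assumes "n \<ge> T" "f \<notin> M" "IRn f n" shows "IRn f (Suc n)"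
proof (cases "m (Suc n) = U n")
  case True
  show ?thesis unfolding stepU[OF assms(1) True assms(2)] by (rule IR_U[OF w2(3)[OF assms(1)] assms(3)])
next
  case False
  then have h: "m (Suc n) = W n" using next_in[OF assms(1)] by simp
  show ?thesis unfolding stepW[OF assms(1) h assms(2)] by (rule IR_W[OF w2(2)[OF assms(1)] assms(3)])
qed

lemma IR_forever: assumes "n \<ge> T" "f \<notin> M" "IRn f n" "n' \<ge> n" shows "IRn f n'"
  using assms(4)
proof (induction n' rule: dec_induct)
  case base then show ?case using assms(3) .
next
  case (step k) then show ?case using IR_step assms(1,2) by simp
qed

lemma GR_step: assumes "n \<ge> T" "f \<notin> M"
  shows "GRn f (Suc n) \<or> mu (X f (Suc n)) (Y f (Suc n)) (Z f (Suc n)) < mu (X f n) (Y f n) (Z f n)"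
proof (cases "m (Suc n) = U n")
  case True
  show ?thesis unfolding stepU[OF assms(1) True assms(2)] by (rule GR_U[OF w2(1,3)[OF assms(1)]])
next
  case False
  then have h: "m (Suc n) = W n" using next_in[OF assms(1)] by simp
  show ?thesis unfolding stepW[OF assms(1) h assms(2)] by (rule GR_W[OF w2(1,2)[OF assms(1)]])
qed

lemma mu_nn: "mu x y z \<ge> 0" by (simp add: mu_def)

lemma GR_ev: assumes "f \<notin> M" shows "\<exists>n\<ge>T. GRn f n"
proof (rule descent[where g = "\<lambda>n. mu (X f n) (Y f n) (Z f n)" and P = "\<lambda>n. GRn f n"])
  fix n assume "n \<ge> T"
  then show "GRn f (Suc n) \<or> mu (X f (Suc n)) (Y f (Suc n)) (Z f (Suc n)) < mu (X f n) (Y f n) (Z f n)"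
    by (rule GR_step[OF _ assms])
next
  fix n show "mu (X f n) (Y f n) (Z f n) \<ge> 0" by (rule mu_nn)
qed

lemma P_stepU: assumes "n \<ge> T" "f \<notin> M" "KUn f n \<or> IRn f n" shows "KUn f (Suc n) \<or> IRn f (Suc n)"
proof (cases "m (Suc n) = U n")
  case True
  note e = stepU[OF assms(1) True assms(2)]
  show ?thesis using assms(3)
  proof
    assume "KUn f n"
    then show ?thesis unfolding e using KU_U[OF w2(3)[OF assms(1)]] by blast
  next
    assume "IRn f n"
    then show ?thesis using IR_step assms by blast
  qed
next
  case False
  then have h: "m (Suc n) = W n" using next_in[OF assms(1)] by simp
  note e = stepW[OF assms(1) h assms(2)]
  show ?thesis using assms(3)
  proof
    assume "KUn f n"
    then show ?thesis unfolding e using KU_W[OF w2(1,2)[OF assms(1)]] by blast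
  next
    assume "IRn f n"
    then show ?thesis using IR_step assms by blast
  qed
qed

lemma P_stepW: assumes "n \<ge> T" "f \<notin> M" "KUn f n \<or> IRn f n" "m (Suc n) = W n" shows "IRn f (Suc n)"
proof -
  note e = stepW[OF assms(1) assms(4) assms(2)]
  show ?thesis using assms(3)
  proof
    assume "KUn f n"
    then show ?thesis unfolding e using KU_W[OF w2(1,2)[OF assms(1)]] by blast
  next
    assume "IRn f n"
    then show ?thesis using IR_step assms by blast
  qed
qed

lemma Q_stepW: assumes "n \<ge> T" "f \<notin> M" "KWn f n \<or> IRn f n" shows "KWn f (Suc n) \<or> IRn f (Suc n)"
proof (cases "m (Suc n) = U n")
  case True
  note e = stepU[OF assms(1) True assms(2)]
  show ?thesis using assms(3)
  proof
    assume "KWn f n"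
    then show ?thesis unfolding e using KW_U[OF w2(1,3)[OF assms(1)]] by blast
  next
    assume "IRn f n"
    then show ?thesis using IR_step assms by blast
  qed
next
  case False
  then have h: "m (Suc n) = W n" using next_in[OF assms(1)] by simp
  note e = stepW[OF assms(1) h assms(2)]
  show ?thesis using assms(3)
  proof
    assume "KWn f n"
    then show ?thesis unfolding e using KW_W[OF w2(2)[OF assms(1)]] by blast
  next
    assume "IRn f n"
    then show ?thesis using IR_step assms by blast
  qed
qed

lemma Q_stepU: assumes "n \<ge> T" "f \<notin> M" "KWn f n \<or> IRn f n" "m (Suc n) = U n" shows "IRn f (Suc n)"
proof -
  note e = stepU[OF assms(1) assms(4) assms(2)]
  show ?thesis using assms(3)
  proof
    assume "KWn f n"
    then show ?thesis unfolding e using KW_U[OF w2(1,3)[OF assms(1)]] by blast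
  next
    assume "IRn f n"
    then show ?thesis using IR_step assms by blast
  qed
qed

lemma W_const: assumes "n \<ge> T" "\<forall>n'\<ge>n. m (Suc n') \<noteq> W n'" "n' \<ge> n" shows "W n' = W n"
  using assms(3)
proof (induction n' rule: dec_induct)
  case base then show ?case by simp
next
  case (step k)
  have "m (Suc k) = U k" using next_in[of k] assms(1,2) step by auto
  then show ?case using trans_U[of k] assms(1) step by auto
qed

lemma U_const: assumes "n \<ge> T" "\<forall>n'\<ge>n. m (Suc n') \<noteq> U n'" "n' \<ge> n" shows "U n' = U n"
  using assms(3)
proof (induction n' rule: dec_induct)
  case base then show ?case by simp
next
  case (step k)
  have "m (Suc k) = W k" using next_in[of k] assms(1,2) step by auto
  then show ?case using trans_W[of k] assms(1) step by auto
qed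

lemma fin_contra: assumes "v \<in> M" "\<forall>i>n. m i \<noteq> v" shows False
proof -
  have "{i. m i = v} \<subseteq> {..n}" using assms(2) by (auto simp: not_less[symmetric])
  then have "finite {i. m i = v}" using finite_subset by blast
  then show False using wbal[OF assms(1)] by simp
qed

lemma switchW: assumes "n \<ge> T" shows "\<exists>n'\<ge>n. m (Suc n') = W n'"
proof (rule ccontr)
  assume H: "\<not> (\<exists>n'\<ge>n. m (Suc n') = W n')"
  then have H': "\<forall>n'\<ge>n. m (Suc n') \<noteq> W n'" by blast
  have "\<forall>i>n. m i \<noteq> W n"
  proof (intro allI impI)
    fix i assume "i > n"
    then obtain k where k: "i = Suc k" "k \<ge> n" by (cases i) auto
    then show "m i \<noteq> W n" using H' W_const[OF assms H' k(2)] by auto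
  qed
  then show False using fin_contra frF(2)[OF assms] by blast
qed

lemma switchU: assumes "n \<ge> T" shows "\<exists>n'\<ge>n. m (Suc n') = U n'"
proof (rule ccontr)
  assume H: "\<not> (\<exists>n'\<ge>n. m (Suc n') = U n')"
  then have H': "\<forall>n'\<ge>n. m (Suc n') \<noteq> U n'" by blast
  have "\<forall>i>n. m i \<noteq> U n"
  proof (intro allI impI)
    fix i assume "i > n"
    then obtain k where k: "i = Suc k" "k \<ge> n" by (cases i) auto
    then show "m i \<noteq> U n" using H' U_const[OF assms H' k(2)] by auto
  qed
  then show False using fin_contra frF(1)[OF assms] by blast
qed

lemma IR_ev: assumes "f \<notin> M" shows "\<exists>n\<ge>T. IRn f n"
proof -
  obtain n0 where n0: "n0 \<ge> T" "GRn f n0" using GR_ev[OF assms] by blast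
  show ?thesis
  proof (cases "KUn f n0 \<or> IRn f n0")
    case True
    obtain n' where n': "n' \<ge> n0" "m (Suc n') = W n'" using switchW[OF n0(1)] by blast
    have "KUn f k \<or> IRn f k" if "k \<ge> n0" for k
      using that
    proof (induction k rule: dec_induct)
      case base then show ?case using True .
    next
      case (step k) then show ?case using P_stepU[OF _ assms] n0(1) by simp
    qed
    then have "IRn f (Suc n')" using P_stepW[OF _ assms _ n'(2)] n' n0(1) by simp
    then show ?thesis using n' n0(1) by (intro exI[of _ "Suc n'"]) simp
  next
    case False
    then have KW0: "KWn f n0" using n0(2) unfolding GR_def by blast
    obtain n' where n': "n' \<ge> n0" "m (Suc n') = U n'" using switchU[OF n0(1)] by blast
    have "KWn f k \<or> IRn f k" if "k \<ge> n0" for k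
      using that
    proof (induction k rule: dec_induct)
      case base then show ?case using KW0 by simp
    next
      case (step k) then show ?case using Q_stepW[OF _ assms] n0(1) by simp
    qed
    then have "IRn f (Suc n')" using Q_stepU[OF _ assms _ n'(2)] n' n0(1) by simp
    then show ?thesis using n' n0(1) by (intro exI[of _ "Suc n'"]) simp
  qed
qed

lemma IR_all: "\<exists>N\<ge>T. \<forall>f\<in>F. \<forall>n\<ge>N. IRn f n"
proof -
  have ev: "\<exists>N. \<forall>n'\<ge>N. n' \<ge> T \<and> IRn f n'" if "f \<in> F" for f
  proof -
    have fM': "f \<notin> M" using fM that .
    obtain n where n: "n \<ge> T" "IRn f n" using IR_ev[OF fM'] by blast
    show ?thesis
    proof (rule exI[of _ n], intro allI impI conjI)
      fix n' assume "n \<le> n'"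
      then show "T \<le> n'" using n(1) by simp
      show "IRn f n'" by (rule IR_forever[OF n(1) fM' n(2) \<open>n \<le> n'\<close>])
    qed
  qed
  have "\<exists>N. \<forall>f\<in>F. \<forall>n'\<ge>N. n' \<ge> T \<and> IRn f n'"
    by (rule fin_ev[OF finF, where P = "\<lambda>f n'. n' \<ge> T \<and> IRn f n'"]) (rule ev)
  then obtain N where N: "\<forall>f\<in>F. \<forall>n'\<ge>N. n' \<ge> T \<and> IRn f n'" by blast
  show ?thesis
  proof (rule exI[of _ "max N T"], intro conjI ballI allI impI)
    show "T \<le> max N T" by simp
    fix f n assume "f \<in> F" "max N T \<le> n"
    then show "IRn f n" using N by simp
  qed
qed

lemma SC_cyc: "\<exists>N. \<forall>n\<ge>N. sign_coherent M F (S n)"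
proof -
  obtain N where N: "N \<ge> T" "\<forall>f\<in>F. \<forall>n\<ge>N. IRn f n" using IR_all by blast
  have "sign_coherent M F (S (Suc n))" if "n \<ge> N" for n
    unfolding sign_coherent_def
  proof (intro ballI impI)
    fix v assume v: "v \<in> M" and adj: "adj_frozen F (S (Suc n)) v"
    have nT: "n \<ge> T" "Suc n \<ge> T" using that N(1) by auto
    have IRs: "\<forall>f\<in>F. IRn f n \<and> IRn f (Suc n)" using N(2) that by auto
    have "v = m (Suc n) \<or> v = U (Suc n) \<or> v = W (Suc n)"
      using M3[OF card3 inM frF(1,2)[OF nT(2)] frF(3-5)[OF nT(2)] v] .
    then show "red F (S (Suc n)) v \<or> green F (S (Suc n)) v"
    proof (elim disjE)
      assume vm: "v = m (Suc n)"
      have e: "S (Suc n) f v = - S n f v" for f using S_Suc[of n] vm mut_on1 by metis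
      show ?thesis
      proof (cases "m (Suc n) = U n")
        case True
        have "\<forall>f\<in>F. S (Suc n) f v \<ge> 0" using IRs e vm True unfolding X_def IR_def by auto
        then show ?thesis using adj unfolding red_def by simp
      next
        case False
        then have "m (Suc n) = W n" using next_in[OF nT(1)] by simp
        then have "\<forall>f\<in>F. S (Suc n) f v \<le> 0" using IRs e vm unfolding Y_def IR_def by auto
        then show ?thesis using adj unfolding green_def by simp
      qed
    next
      assume "v = U (Suc n)"
      then have "\<forall>f\<in>F. S (Suc n) f v \<le> 0" using IRs unfolding X_def IR_def by auto
      then show ?thesis using adj unfolding green_def by simp
    next
      assume "v = W (Suc n)"
      then have "\<forall>f\<in>F. S (Suc n) f v \<ge> 0" using IRs unfolding Y_def IR_def by auto
      then show ?thesis using adj unfolding red_def by simp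
    qed
  qed
  then show ?thesis by (intro exI[of _ "Suc N"]) (metis Suc_le_D Suc_le_mono)
qed

end

locale QA = QS +
  fixes T :: nat
  assumes acA: "\<And>n. n \<ge> T \<Longrightarrow> \<not> cycS n"
begin

lemma srcsnk: assumes "n \<ge> T"
  shows "src M 1 (S n) (m (Suc n)) \<or> src M (-1) (S n) (m (Suc n))"
proof (rule ccontr)
  let ?j = "m (Suc n)" let ?C = "S n"
  assume H: "\<not> ?thesis"
  obtain p where p: "p \<in> M" "p \<noteq> ?j" "\<not> ?C ?j p > 0" using H inM unfolding src_def by auto
  obtain q where q: "q \<in> M" "q \<noteq> ?j" "\<not> - ?C ?j q > 0" using H inM unfolding src_def by auto
  have pj: "?C p ?j > 0" using S_flip p inM by blast
  have jq: "?C ?j q > 0" using q S_ab[of ?j q n] inM by simp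
  have pq: "p \<noteq> q" using pj jq S_skew[of n p ?j] by auto
  have Cpq: "?C p q > 0"
  proof (rule ccontr)
    assume "\<not> ?C p q > 0"
    then have "?C q p > 0" using S_flip p q pq by blast
    then have "frame M ?C ?j q p" using p q pq pj jq inM unfolding frame_def by auto
    then have "cycS n" using cyc_any[OF card3 _ inM] by blast
    then show False using acA assms by blast
  qed
  have SS: "S (Suc n) = mut ?j ?C" by (rule S_Suc)
  have e1: "S (Suc n) ?j p = ?C p ?j" using SS mut_on2[of ?j ?C p] S_skew[of n ?j p] by simp
  have e2: "S (Suc n) p q = ?C p q + ?C p ?j * ?C ?j q"
    using SS mut_off[of p ?j q ?C] p q pj jq S_flip2[OF pj] S_flip2[OF jq] by simp
  have e3: "S (Suc n) q ?j = ?C ?j q" using SS mut_on1[of ?j ?C q] S_skew[of n q ?j] by simp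
  have "?C p ?j * ?C ?j q > 0" using pj jq by simp
  then have "S (Suc n) p q > 0" using e2 Cpq by linarith
  then have "frame M (S (Suc n)) ?j p q" using e1 e3 p q pq pj jq inM unfolding frame_def by auto
  then have "cycS (Suc n)" unfolding cyc_def by blast
  then show False using acA assms by simp
qed

lemma src_step: assumes "n \<ge> T" "s = 1 \<or> s = -1" "src M s (S n) (m (Suc n))"
  shows "src M s (S (Suc n)) (m (Suc (Suc n)))"
proof -
  let ?j = "m (Suc n)" let ?j' = "m (Suc (Suc n))"
  have neq: "?j' \<noteq> ?j" using redm[of "Suc n"] by simp
  have a: "s * S n ?j ?j' > 0" using assms(3) inM neq unfolding src_def by auto
  have e: "S (Suc n) ?j' ?j = S n ?j ?j'" using S_Suc[of n] mut_on1[of ?j "S n" ?j'] S_skew[of n ?j' ?j] by simp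
  have "\<not> src M (-s) (S (Suc n)) ?j'"
  proof
    assume "src M (-s) (S (Suc n)) ?j'"
    then have "- s * S (Suc n) ?j' ?j > 0" using inM neq unfolding src_def by auto
    then show False using a e by simp
  qed
  then show ?thesis using srcsnk[of "Suc n"] assms(1,2) by auto
qed

lemma regime_s: "\<exists>s. (s = 1 \<or> s = -1) \<and> (\<forall>n\<ge>T. src M s (S n) (m (Suc n)))"
proof -
  obtain s where s: "s = 1 \<or> s = -1" "src M s (S T) (m (Suc T))" using srcsnk[of T] by auto
  have "src M s (S n) (m (Suc n))" if "n \<ge> T" for n
    using that
  proof (induction n rule: dec_induct)
    case base then show ?case using s(2) .
  next
    case (step k) then show ?case using src_step s(1) by blast
  qed
  then show ?thesis using s(1) by blast
qed

end

locale QA2 = QA +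
  fixes s :: int
  assumes s1: "s = 1 \<or> s = -1" and srcA: "\<And>n. n \<ge> T \<Longrightarrow> src M s (S n) (m (Suc n))"
begin

lemma srcv: "n \<ge> T \<Longrightarrow> v \<in> M \<Longrightarrow> v \<noteq> m (Suc n) \<Longrightarrow> s * S n (m (Suc n)) v > 0"
  using srcA unfolding src_def by blast

lemma sinkv: assumes "n \<ge> T" "v \<in> M" "v \<noteq> m (Suc n)" shows "s * S (Suc n) v (m (Suc n)) > 0"
  using srcv[OF assms] S_Suc[of n] mut_on1[of "m (Suc n)" "S n" v] S_skew[of n v "m (Suc n)"] by simp

lemma dist3: assumes "n \<ge> Suc T" shows "m (Suc (Suc n)) \<noteq> m n"
proof
  assume H: "m (Suc (Suc n)) = m n"
  obtain n0 where n0: "n = Suc n0" "n0 \<ge> T" using assms by (cases n) auto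
  let ?k = "m n" let ?j = "m (Suc n)" let ?C = "S n"
  have kj: "?k \<noteq> ?j" using redm by simp
  obtain md where md: "md \<in> M" "md \<noteq> ?k" "md \<noteq> ?j"
  proof -
    obtain p q where "p \<in> M" "q \<in> M" "p \<noteq> q" "p \<noteq> ?j" "q \<noteq> ?j" using other2[OF card3 inM] by blast
    then show ?thesis using that by (cases "p = ?k") auto
  qed
  have nT: "n \<ge> T" using assms by simp
  have sj: "s * ?C ?j md > 0" "s * ?C ?j ?k > 0" using srcv[OF nT] md kj inM by auto
  have sk: "s * ?C md ?k > 0" using sinkv[OF n0(2), of md] md n0(1) inM by simp
  have "src M s (S (Suc n)) ?k" using srcA[of "Suc n"] nT H by simp
  then have t: "s * S (Suc n) ?k md > 0" using md unfolding src_def by auto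
  have e: "S (Suc n) ?k md = ?C ?k md + max (?C ?k ?j) 0 * max (?C ?j md) 0 - max (?C md ?j) 0 * max (?C ?j ?k) 0"
    using S_Suc[of n] mut_off[of ?k ?j md ?C] kj md by simp
  have sk1: "?C ?k ?j = - ?C ?j ?k" "?C md ?j = - ?C ?j md" "?C ?k md = - ?C md ?k" using S_skew by blast+
  show False using s1
  proof
    assume "s = 1" then show False using e sk1 sj sk t by simp
  next
    assume "s = -1" then show False using e sk1 sj sk t by simp
  qed
qed

lemma M3n: assumes "n \<ge> Suc T" "v \<in> M" shows "v = m n \<or> v = m (Suc n) \<or> v = m (Suc (Suc n))"
  using M3[OF card3 inM inM inM redm[of n] redm[of "Suc n"] dist3[OF assms(1), symmetric] assms(2)] .

lemma third: assumes "n \<ge> Suc T" shows "m (Suc (Suc (Suc n))) = m n"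
  using M3n[OF assms inM[of "Suc (Suc (Suc n))"]] redm[of "Suc (Suc n)"] dist3[of "Suc n"] assms by auto

definition al where "al f n = s * S n f (m (Suc n))"
definition be where "be f n = s * S n f (m (Suc (Suc n)))"
definition ga where "ga f n = s * S n f (m n)"
definition pp where "pp n = s * S n (m (Suc n)) (m (Suc (Suc n)))"
definition qq where "qq n = s * S n (m (Suc n)) (m n)"

lemma s2: "s * x > 0 \<Longrightarrow> \<bar>x\<bar> \<ge> 2 \<Longrightarrow> s * x \<ge> 2"
  using s1 by auto

lemma pq2: assumes "n \<ge> T" shows "pp n \<ge> 2" "qq n \<ge> 2"
proof -
  have "s * S n (m (Suc n)) (m (Suc (Suc n))) > 0" using srcv[OF assms] inM redm[of "Suc n"] by metis
  then show "pp n \<ge> 2" unfolding pp_def using s2 S_ab inM redm by metis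
  have "s * S n (m (Suc n)) (m n) > 0" using srcv[OF assms] inM redm[of n] by metis
  then show "qq n \<ge> 2" unfolding qq_def using s2 S_ab inM redm by metis
qed

lemma rowstep: assumes "j \<noteq> v" "f \<noteq> j" "f \<noteq> v" "s * C j v > 0" "C v j = - C j v" "C j f = - C f j"
  shows "s * mut j C f v = s * C f v + (s * C j v) * max (s * C f j) 0"
proof -
  have e: "mut j C f v = C f v + max (C f j) 0 * max (C j v) 0 - max (C v j) 0 * max (C j f) 0"
    using mut_off[of f j v C] assms by simp
  show ?thesis using s1
  proof
    assume s: "s = 1"
    then show ?thesis using e s assms(4-6) by (simp add: max_def)
  next
    assume s: "s = -1"
    then show ?thesis using e s assms(4-6) by (simp add: max_def)
  qed
qed

end

context QA2 begin

lemma stepA: assumes "n \<ge> Suc T" "f \<notin> M"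
  shows "al f (Suc n) = be f n + pp n * max (al f n) 0"
    "be f (Suc n) = ga f n + qq n * max (al f n) 0"
    "ga f (Suc n) = - al f n"
proof -
  let ?j = "m (Suc n)" let ?md = "m (Suc (Suc n))" let ?k = "m n" let ?C = "S n"
  have nT: "n \<ge> T" using assms by simp
  have SS: "S (Suc n) = mut ?j ?C" by (rule S_Suc)
  have d: "?j \<noteq> ?md" "?j \<noteq> ?k" using redm[of n] redm[of "Suc n"] by auto
  have fn: "f \<noteq> ?j" "f \<noteq> ?md" "f \<noteq> ?k" using assms(2) inM by metis+
  have p: "s * ?C ?j ?md > 0" "s * ?C ?j ?k > 0" using srcv[OF nT] inM d by auto
  show "al f (Suc n) = be f n + pp n * max (al f n) 0"
    unfolding al_def be_def pp_def SS
    by (rule rowstep[OF d(1) fn(1) fn(2) p(1) S_skew S_skew])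
  show "be f (Suc n) = ga f n + qq n * max (al f n) 0"
    unfolding al_def be_def ga_def qq_def SS third[OF assms(1)]
    by (rule rowstep[OF d(2) fn(1) fn(3) p(2) S_skew S_skew])
  show "ga f (Suc n) = - al f n"
    unfolding al_def ga_def SS by (simp add: mut_on1)
qed

abbreviation "JJn f n \<equiv> JJ (al f n) (be f n) (ga f n)"

lemma JJ_step: assumes "n \<ge> Suc T" "f \<notin> M" "JJn f n" shows "JJn f (Suc n)"
  unfolding stepA[OF assms(1,2)] using JJ_S[OF pq2[of n] assms(3)] assms(1) by simp

lemma JJ_forever: assumes "n \<ge> Suc T" "f \<notin> M" "JJn f n" "n' \<ge> n" shows "JJn f n'"
  using assms(4)
proof (induction n' rule: dec_induct)
  case base then show ?case using assms(3) .
next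
  case (step k) then show ?case using JJ_step assms(1,2) by simp
qed

lemma mua_nn: "mua x y z \<ge> 0"
  unfolding mua_def using hh_bd[of x y z] by simp

lemma JJ_ev: assumes "f \<notin> M" shows "\<exists>n\<ge>Suc T. JJn f n"
proof (rule descent[where g = "\<lambda>n. mua (al f n) (be f n) (ga f n)" and P = "\<lambda>n. JJn f n"])
  fix n assume n: "n \<ge> Suc T"
  show "JJn f (Suc n) \<or> mua (al f (Suc n)) (be f (Suc n)) (ga f (Suc n)) < mua (al f n) (be f n) (ga f n)"
    unfolding stepA[OF n assms] using JJ_S_dec[OF pq2[of n]] n by simp
next
  fix n show "mua (al f n) (be f n) (ga f n) \<ge> 0" by (rule mua_nn)
qed

lemma JJ_all: "\<exists>N\<ge>Suc T. \<forall>f\<in>F. \<forall>n\<ge>N. JJn f n"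
proof -
  have ev: "\<exists>N. \<forall>n'\<ge>N. n' \<ge> Suc T \<and> JJn f n'" if "f \<in> F" for f
  proof -
    have fM': "f \<notin> M" using fM that .
    obtain n where n: "n \<ge> Suc T" "JJn f n" using JJ_ev[OF fM'] by blast
    show ?thesis
    proof (rule exI[of _ n], intro allI impI conjI)
      fix n' assume "n \<le> n'"
      then show "Suc T \<le> n'" using n(1) by simp
      show "JJn f n'" by (rule JJ_forever[OF n(1) fM' n(2) \<open>n \<le> n'\<close>])
    qed
  qed
  have "\<exists>N. \<forall>f\<in>F. \<forall>n'\<ge>N. n' \<ge> Suc T \<and> JJn f n'"
    by (rule fin_ev[OF finF, where P = "\<lambda>f n'. n' \<ge> Suc T \<and> JJn f n'"]) (rule ev)
  then obtain N where N: "\<forall>f\<in>F. \<forall>n'\<ge>N. n' \<ge> Suc T \<and> JJn f n'" by blast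
  show ?thesis
  proof (rule exI[of _ "max N (Suc T)"], intro conjI ballI allI impI)
    show "Suc T \<le> max N (Suc T)" by simp
    fix f n assume "f \<in> F" "max N (Suc T) \<le> n"
    then show "JJn f n" using N by simp
  qed
qed

lemma pos_col: "(\<forall>f\<in>F. s * C f v \<ge> 0) \<Longrightarrow> adj_frozen F C v \<Longrightarrow> red F C v \<or> green F C v"
  using s1 unfolding red_def green_def by auto

lemma SC_acyc: "\<exists>N. \<forall>n\<ge>N. sign_coherent M F (S n)"
proof -
  obtain N where N: "N \<ge> Suc T" "\<forall>f\<in>F. \<forall>n\<ge>N. JJn f n" using JJ_all by blast
  have "sign_coherent M F (S n)" if "n \<ge> N" for n
    unfolding sign_coherent_def
  proof (intro ballI impI)
    fix v assume v: "v \<in> M" and adj: "adj_frozen F (S n) v"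
    have nT: "n \<ge> Suc T" using that N(1) by auto
    have J: "\<forall>f\<in>F. JJn f n" using N(2) that by auto
    have "v = m n \<or> v = m (Suc n) \<or> v = m (Suc (Suc n))" using M3n[OF nT v] .
    then show "red F (S n) v \<or> green F (S n) v"
    proof (elim disjE)
      assume "v = m n"
      then have "\<forall>f\<in>F. (-s) * S n f v \<ge> 0" using J unfolding ga_def JJ_def by auto
      then show ?thesis using adj s1 unfolding red_def green_def by auto
    next
      assume "v = m (Suc n)"
      then have "\<forall>f\<in>F. s * S n f v \<ge> 0" using J unfolding al_def JJ_def by auto
      then show ?thesis using pos_col adj by blast
    next
      assume "v = m (Suc (Suc n))"
      then have "\<forall>f\<in>F. s * S n f v \<ge> 0" using J unfolding be_def JJ_def by auto
      then show ?thesis using pos_col adj by blast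
    qed
  qed
  then show ?thesis by blast
qed

end

context QS begin

lemma SC_final: "\<exists>N. \<forall>n\<ge>N. sign_coherent M F (S n)"
  using regime
proof
  assume "\<exists>T. \<forall>n\<ge>T. cycS n"
  then obtain T where "\<forall>n\<ge>T. cycS n" by blast
  then interpret QC M F B m T by unfold_locales blast
  show ?thesis by (rule SC_cyc)
next
  assume "\<exists>T. \<forall>n\<ge>T. \<not> cycS n"
  then obtain T where T: "\<forall>n\<ge>T. \<not> cycS n" by blast
  then interpret QA M F B m T by unfold_locales blast
  obtain s where s: "s = 1 \<or> s = -1" "\<forall>n\<ge>T. src M s (S n) (m (Suc n))" using regime_s by blast
  interpret QA2 M F B m T s using s by unfold_locales blast+
  show ?thesis by (rule SC_acyc)
qed

end

theorem mainTheorem17: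
  fixes M F :: "'v set" and B :: "'v \<Rightarrow> 'v \<Rightarrow> int" and m :: "nat \<Rightarrow> 'v"
  assumes "quiver M F B"
    and "card M = 3"
    and "F \<noteq> {}"
    and "connected_quiver M F B"
    and "mutation_abundant M (mutable_part M B)"
    and "\<forall>i. m i \<in> M"
    and "reduced_seq m"
    and "weakly_balanced M m"
  shows "\<exists>i. \<forall>j>i. sign_coherent M F (mutseq m B j)"
proof -
  interpret QS M F B m
  proof
    show "\<And>i k. B i k = - B k i" using assms(1) unfolding quiver_def by blast
    show "card M = 3" by (rule assms(2))
    show "M \<inter> F = {}" using assms(1) unfolding quiver_def by blast
    show "finite F" using assms(1) unfolding quiver_def by blast
    show "mutation_abundant M (mutable_part M B)" by (rule assms(5))
    show "\<And>i. m i \<in> M" using assms(6) by blast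
    show "\<And>i. m i \<noteq> m (Suc i)" using assms(7) unfolding reduced_seq_def by blast
    show "\<And>v. v \<in> M \<Longrightarrow> infinite {i. m i = v}" using assms(8) unfolding weakly_balanced_def by blast
  qed
  obtain N where N: "\<forall>n\<ge>N. sign_coherent M F (S n)" using SC_final by blast
  show ?thesis
  proof (rule exI[of _ N], intro allI impI)
    fix j assume "j > N"
    then obtain n where n: "j = Suc n" "n \<ge> N" by (cases j) auto
    then show "sign_coherent M F (mutseq m B j)" using N unfolding S_def by simp
  qed
qed

end
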